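(* Let $L$ be a distributive lattice and $\mathbf x,\mathbf y\in L^n$. Then $\mathbf x$ and $\mathbf y$ are g-comonotone if and only if they are dually g-comonotone.
   Context: $\mathbf x,\mathbf y\in L^n$ are g-comonotone if for every pair $i,j\in\{1,\dots,n\}$: $(x_i\vee y_i)\wedge(x_j\vee y_j)=(x_i\wedge x_j)\vee(y_i\wedge y_j)$. They are dually g-comonotone if for every pair $i,j$: $(x_i\wedge y_i)\vee(x_j\wedge y_j)=(x_i\vee x_j)\wedge(y_i\vee y_j)$. *)

theory Defs
  imports Main
begin

text \<open>Vectors in L^n are represented as functions nat => L, with components
  indexed by i < n (i.e. 0..n-1 instead of 1..n).\<close>

definition g_comonotone :: "nat \<Rightarrow> (nat \<Rightarrow> 'a::lattice) \<Rightarrow> (nat \<Rightarrow> 'a) \<Rightarrow> bool" where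
  "g_comonotone n x y \<longleftrightarrow> (\<forall>i<n. \<forall>j<n.
     inf (sup (x i) (y i)) (sup (x j) (y j)) = sup (inf (x i) (x j)) (inf (y i) (y j)))"

definition dually_g_comonotone :: "nat \<Rightarrow> (nat \<Rightarrow> 'a::lattice) \<Rightarrow> (nat \<Rightarrow> 'a) \<Rightarrow> bool" where
  "dually_g_comonotone n x y \<longleftrightarrow> (\<forall>i<n. \<forall>j<n.
     sup (inf (x i) (y i)) (inf (x j) (y j)) = inf (sup (x i) (x j)) (sup (y i) (y j)))"

end

theory Submission
  imports Defs
begin

lemma expand1: "inf (sup a b) (sup c d) = sup (sup (inf a c) (inf b d)) (sup (inf a d) (inf b c))" for a::"'a::distrib_lattice"
proof -
  have "inf (sup a b) (sup c d) = sup (sup (inf a c) (inf b c)) (sup (inf a d) (inf b d))"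
    by (simp only: inf_sup_distrib1 inf_sup_distrib2)
  also have "\<dots> = sup (sup (inf a c) (inf b d)) (sup (inf a d) (inf b c))"
    by (simp only: sup_aci)
  finally show ?thesis .
qed

lemma expand2: "inf (sup a c) (sup b d) = sup (sup (inf a b) (inf c d)) (sup (inf a d) (inf b c))" for a::"'a::distrib_lattice"
proof -
  have "inf (sup a c) (sup b d) = sup (sup (inf a b) (inf c b)) (sup (inf a d) (inf c d))"
    by (simp only: inf_sup_distrib1 inf_sup_distrib2)
  also have "\<dots> = sup (sup (inf a b) (inf c d)) (sup (inf a d) (inf b c))"
    by (simp only: sup_aci inf_aci)
  finally show ?thesis .
qed

lemma absorb4: "x = sup (sup p q) (sup r s) \<Longrightarrow> (x = sup p q \<longleftrightarrow> r \<le> sup p q \<and> s \<le> sup p q)" for x::"'a::lattice"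
  by (metis sup.absorb_iff1 sup.assoc sup.orderE sup.bounded_iff)

lemma leinf: "u \<le> X \<longleftrightarrow> u = inf u X" for u::"'a::lattice"
  by (metis inf.absorb_iff1)

lemma k1: "inf a d \<le> sup (inf a c) (inf b d) \<longleftrightarrow> inf a d \<le> sup (inf a b) (inf c d)" for a::"'a::distrib_lattice"
proof -
  have e1: "inf (inf a d) (sup (inf a c) (inf b d)) = sup (inf (inf a d) (inf a c)) (inf (inf a d) (inf b d))"
    by (simp only: inf_sup_distrib1)
  have e2: "inf (inf a d) (sup (inf a b) (inf c d)) = sup (inf (inf a d) (inf a b)) (inf (inf a d) (inf c d))"
    by (simp only: inf_sup_distrib1)
  have e3: "sup (inf (inf a d) (inf a c)) (inf (inf a d) (inf b d)) = sup (inf (inf a d) (inf a b)) (inf (inf a d) (inf c d))"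
    by (simp only: inf_aci sup_aci inf.idem inf.left_idem)
  show ?thesis using e1 e2 e3 leinf by metis
qed

lemma k2: "inf b c \<le> sup (inf a c) (inf b d) \<longleftrightarrow> inf b c \<le> sup (inf a b) (inf c d)" for a::"'a::distrib_lattice"
proof -
  have e1: "inf (inf b c) (sup (inf a c) (inf b d)) = sup (inf (inf b c) (inf a c)) (inf (inf b c) (inf b d))"
    by (simp only: inf_sup_distrib1)
  have e2: "inf (inf b c) (sup (inf a b) (inf c d)) = sup (inf (inf b c) (inf a b)) (inf (inf b c) (inf c d))"
    by (simp only: inf_sup_distrib1)
  have e3: "sup (inf (inf b c) (inf a c)) (inf (inf b c) (inf b d)) = sup (inf (inf b c) (inf a b)) (inf (inf b c) (inf c d))"
    by (simp only: inf_aci sup_aci inf.idem inf.left_idem)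
  show ?thesis using e1 e2 e3 leinf by metis
qed

lemma pair: "inf (sup a b) (sup c d) = sup (inf a c) (inf b d) \<longleftrightarrow> sup (inf a b) (inf c d) = inf (sup a c) (sup b d)" for a::"'a::distrib_lattice"
proof -
  have "inf (sup a b) (sup c d) = sup (inf a c) (inf b d) \<longleftrightarrow> inf a d \<le> sup (inf a c) (inf b d) \<and> inf b c \<le> sup (inf a c) (inf b d)"
    using absorb4[OF expand1] .
  moreover have "inf (sup a c) (sup b d) = sup (inf a b) (inf c d) \<longleftrightarrow> inf a d \<le> sup (inf a b) (inf c d) \<and> inf b c \<le> sup (inf a b) (inf c d)"
    using absorb4[OF expand2] .
  ultimately show ?thesis using k1 k2 by (metis (no_types))
qed

theorem theorem1:
  fixes n :: nat and x y :: "nat \<Rightarrow> 'a::distrib_lattice"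
  shows "g_comonotone n x y \<longleftrightarrow> dually_g_comonotone n x y"
  unfolding g_comonotone_def dually_g_comonotone_def using pair by metis

end
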